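(* Let $m,n$ be relatively prime natural numbers. Let $J$ be the lattice of all clones $C\subseteq\mathcal{O}$ containing the binary addition modulo $mn$, and let $J_m$ (resp. $J_n$) be the lattice of all clones on $\mathbb{Z}_m$ (resp. $\mathbb{Z}_n$) containing the addition modulo $m$ (resp. modulo $n$). Then $J$ is isomorphic to the direct product $J_m\times J_n$, via the mutually inverse maps $C\mapsto (C_m,C_n)$ and $(D,E)\mapsto D\times E$.
   Context: $\mathbb{Z}_k=\{0,\dots,k-1\}$, and $x \bmod k$ is the unique element of $\mathbb{Z}_k$ congruent to $x$ modulo $k$. $\mathcal{O}$ is the set of all finitary operations on $\mathbb{Z}_{mn}$ preserving the congruences $\equiv \pmod m$ and $\equiv\pmod n$. For $k$-ary $f\in\mathcal{O}$, $f_m$ is the operation on $\mathbb{Z}_m$ given by $f_m(x_1,\dots,x_k)=f(x_1,\dots,x_k)\bmod m$, similarly $f_n$. For $k$-ary operations $g$ on $\mathbb{Z}_m$ and $h$ on $\mathbb{Z}_n$, $g\times h$ is the $k$-ary operation on $\mathbb{Z}_{mn}$ whose value at $(x_1,\dots,x_k)$ is the unique element of $\mathbb{Z}_{mn}$ congruent to $g(x_1\bmod m,\dots,x_k\bmod m)$ modulo $m$ and to $h(x_1\bmod n,\dots,x_k\bmod n)$ modulo $n$. For a clone $C\subseteq \mathcal{O}$, $C_m=\{f_m\mid f\in C\}$, $C_n=\{f_n\mid f\in C\}$; for clones $D$ on $\mathbb{Z}_m$, $E$ on $\mathbb{Z}_n$, $D\times E=\{g\times h\mid g\in D, h\in E\text{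 of the same arity}\}$. *)

theory Defs
  imports Main
begin

text \<open>A k-ary operation on Z_N is represented as a pair (k, f) with
  f :: nat list => nat; f is canonical: outside of the tuples of length k
  with entries in Z_N it returns 0, so that equal operations are equal terms.\<close>

type_synonym operation = "nat \<times> (nat list \<Rightarrow> nat)"

definition valid :: "nat \<Rightarrow> nat \<Rightarrow> nat list \<Rightarrow> bool" where
  "valid N k xs \<longleftrightarrow> length xs = k \<and> (\<forall>x\<in>set xs. x < N)"

definition is_op :: "nat \<Rightarrow> operation \<Rightarrow> bool" where
  "is_op N p \<longleftrightarrow> fst p \<ge> 1 \<and> (\<forall>xs. valid N (fst p) xs \<longrightarrow> snd p xs < N)
     \<and> (\<forall>xs. \<not> valid N (fst p) xs \<longrightarrow> snd p xs = 0)"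

definition ops :: "nat \<Rightarrow> operation set" where
  "ops N = {p. is_op N p}"

definition proj :: "nat \<Rightarrow> nat \<Rightarrow> nat \<Rightarrow> operation" where
  "proj N k i = (k, \<lambda>xs. if valid N k xs then xs ! i else 0)"

definition compose :: "nat \<Rightarrow> operation \<Rightarrow> nat \<Rightarrow> operation list \<Rightarrow> operation" where
  "compose N f l gs = (l, \<lambda>xs. if valid N l xs then snd f (map (\<lambda>g. snd g xs) gs) else 0)"

definition clone :: "nat \<Rightarrow> operation set \<Rightarrow> bool" where
  "clone N C \<longleftrightarrow> C \<subseteq> ops N
     \<and> (\<forall>k i. 1 \<le> k \<longrightarrow> i < k \<longrightarrow> proj N k i \<in> C)
     \<and> (\<forall>f\<in>C. \<forall>l\<ge>1. \<forall>gs. length gs = fst f \<and> (\<forall>g\<in>set gs. g \<in> C \<and> fst g = l)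
            \<longrightarrow> compose N f l gs \<in> C)"

definition addop :: "nat \<Rightarrow> operation" where
  "addop N = (2, \<lambda>xs. if valid N 2 xs then (xs ! 0 + xs ! 1) mod N else 0)"

definition pres_cong :: "nat \<Rightarrow> nat \<Rightarrow> operation \<Rightarrow> bool" where
  "pres_cong N d p \<longleftrightarrow> (\<forall>xs ys. valid N (fst p) xs \<longrightarrow> valid N (fst p) ys \<longrightarrow>
      (\<forall>i<fst p. xs ! i mod d = ys ! i mod d) \<longrightarrow> snd p xs mod d = snd p ys mod d)"

definition Ocong :: "nat \<Rightarrow> nat \<Rightarrow> operation set" where
  "Ocong m n = {p. p \<in> ops (m * n) \<and> pres_cong (m * n) m p \<and> pres_cong (m * n) n p}"

definition restr :: "nat \<Rightarrow> operation \<Rightarrow> operation" where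
  "restr d p = (fst p, \<lambda>xs. if valid d (fst p) xs then snd p xs mod d else 0)"

definition prod_op :: "nat \<Rightarrow> nat \<Rightarrow> operation \<Rightarrow> operation \<Rightarrow> operation" where
  "prod_op m n g h = (fst g, \<lambda>xs. if valid (m * n) (fst g) xs then
      (THE z. z < m * n \<and> z mod m = snd g (map (\<lambda>x. x mod m) xs)
                        \<and> z mod n = snd h (map (\<lambda>x. x mod n) xs)) else 0)"

definition clone_prod :: "nat \<Rightarrow> nat \<Rightarrow> operation set \<Rightarrow> operation set \<Rightarrow> operation set" where
  "clone_prod m n D E = {prod_op m n g h | g h. g \<in> D \<and> h \<in> E \<and> fst g = fst h}"

definition JJ :: "nat \<Rightarrow> nat \<Rightarrow> operation set set" where
  "JJ m n = {C. clone (m * n) C \<and> C \<subseteq> Ocong m n \<and> addop (m * n) \<in> C}"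

definition Jk :: "nat \<Rightarrow> operation set set" where
  "Jk k = {D. clone k D \<and> addop k \<in> D}"

end

theory Submission
  imports Defs "HOL-Number_Theory.Cong"
begin

lemma crt_unique:
  fixes m n z w :: nat
  assumes "coprime m n" "z < m*n" "w < m*n" "z mod m = w mod m" "z mod n = w mod n"
  shows "z = w"
proof -
  have "[z = w] (mod m*n)" using assms coprime_cong_mult_nat unfolding cong_def by blast
  then show ?thesis using assms(2,3) unfolding cong_def by simp
qed

lemma crt_exists:
  fixes m n a b :: nat
  assumes "coprime m n" "0 < m" "0 < n"
  shows "\<exists>z<m*n. z mod m = a mod m \<and> z mod n = b mod n"
proof -
  obtain x where x: "[x = a] (mod m)" "[x = b] (mod n)"
    using binary_chinese_remainder_nat[OF assms(1)] by blast
  have "x mod (m*n) < m*n" using assms by simp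
  moreover have "x mod (m*n) mod m = a mod m" using x(1) unfolding cong_def
    by (simp add: mod_mod_cancel)
  moreover have "x mod (m*n) mod n = b mod n" using x(2) unfolding cong_def
    by (metis dvd_triv_right mod_mod_cancel)
  ultimately show ?thesis by blast
qed

lemma the_crt:
  fixes m n :: nat
  assumes "coprime m n" "z < m*n" "z mod m = a" "z mod n = b"
  shows "(THE z. z < m*n \<and> z mod m = a \<and> z mod n = b) = z"
  using assms crt_unique[OF assms(1)] by (intro the_equality) auto

lemma valid_mod:
  assumes "valid N k xs" "0 < d" "d \<le> N"
  shows "valid d k (map (\<lambda>x. x mod d) xs)" "valid N k (map (\<lambda>x. x mod d) xs)"
  using assms unfolding valid_def
  by auto (metis less_le_trans mod_less_divisor)

lemma valid_mono:
  assumes "valid d k xs" "d \<le> N" shows "valid N k xs"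
  using assms unfolding valid_def by auto

lemma pres_cong_mod:
  assumes "pres_cong N d p" "valid N (fst p) xs" "0 < d" "d \<le> N"
  shows "snd p (map (\<lambda>x. x mod d) xs) mod d = snd p xs mod d"
proof -
  have "length xs = fst p" using assms(2) unfolding valid_def by simp
  have "\<forall>i<fst p. map (\<lambda>x. x mod d) xs ! i mod d = xs ! i mod d"
    using \<open>length xs = fst p\<close> by simp
  then show ?thesis using assms(1) valid_mod(2)[OF assms(2-4)] assms(2) unfolding pres_cong_def
    by blast
qed

lemma restr_ops:
  assumes "p \<in> ops N" "0 < d"
  shows "restr d p \<in> ops d"
  using assms unfolding ops_def is_op_def restr_def by auto

lemma restr_snd: "valid d (fst p) ys \<Longrightarrow> snd (restr d p) ys = snd p ys mod d"
  by (simp add: restr_def)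

lemma valid_map:
  assumes "\<forall>g\<in>set gs. g \<in> ops N \<and> fst g = l" "valid N l xs"
  shows "valid N (length gs) (map (\<lambda>g. snd g xs) gs)"
  using assms unfolding valid_def ops_def is_op_def by auto

lemma compose_ops:
  assumes "F \<in> ops N" "\<forall>g\<in>set gs. g \<in> ops N \<and> fst g = l" "length gs = fst F" "1 \<le> l"
  shows "compose N F l gs \<in> ops N"
proof -
  have F: "snd F ys < N" if "valid N (fst F) ys" for ys
    using assms(1) that unfolding ops_def is_op_def by auto
  have "valid N l xs \<Longrightarrow> snd F (map (\<lambda>g. snd g xs) gs) < N" for xs
    using valid_map[OF assms(2)] assms(3) F by simp
  then show ?thesis using assms(4) unfolding ops_def is_op_def compose_def by auto
qed

lemma compose_pres:
  assumes "F \<in> ops N" "pres_cong N d F" "\<forall>g\<in>set gs. g \<in> ops N \<and> fst g = l \<and> pres_cong N d g"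
    "length gs = fst F"
  shows "pres_cong N d (compose N F l gs)"
  unfolding pres_cong_def
proof (intro allI impI)
  fix xs ys assume xs: "valid N (fst (compose N F l gs)) xs" and ys: "valid N (fst (compose N F l gs)) ys"
    and e: "\<forall>i<fst (compose N F l gs). xs ! i mod d = ys ! i mod d"
  have xs': "valid N l xs" and ys': "valid N l ys" and e': "\<forall>i<l. xs ! i mod d = ys ! i mod d"
    using xs ys e by (auto simp: compose_def)
  have g2: "\<forall>g\<in>set gs. g \<in> ops N \<and> fst g = l" using assms(3) by blast
  have vx: "valid N (fst F) (map (\<lambda>g. snd g xs) gs)" and vy: "valid N (fst F) (map (\<lambda>g. snd g ys) gs)"
    using valid_map[OF g2 xs'] valid_map[OF g2 ys'] assms(4) by auto
  have "snd g xs mod d = snd g ys mod d" if "g \<in> set gs" for g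
  proof -
    have pg: "pres_cong N d g" and fg: "fst g = l" using assms(3) that by auto
    have P: "\<And>xs ys. valid N (fst g) xs \<Longrightarrow> valid N (fst g) ys \<Longrightarrow>
       (\<forall>i<fst g. xs ! i mod d = ys ! i mod d) \<Longrightarrow> snd g xs mod d = snd g ys mod d"
      using pg unfolding pres_cong_def by blast
    show ?thesis by (rule P) (simp_all add: fg xs' ys' e')
  qed
  then have "\<forall>i<fst F. map (\<lambda>g. snd g xs) gs ! i mod d = map (\<lambda>g. snd g ys) gs ! i mod d"
    using assms(4) by auto
  then have "snd F (map (\<lambda>g. snd g xs) gs) mod d = snd F (map (\<lambda>g. snd g ys) gs) mod d"
    using assms(2) vx vy unfolding pres_cong_def by blast
  then show "snd (compose N F l gs) xs mod d = snd (compose N F l gs) ys mod d"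
    using xs' ys' by (simp add: compose_def)
qed

lemma restr_compose:
  assumes "0 < d" "d \<le> N" "F \<in> ops N" "pres_cong N d F"
    "\<forall>g\<in>set gs. g \<in> ops N \<and> fst g = l" "length gs = fst F"
  shows "restr d (compose N F l gs) = compose d (restr d F) l (map (restr d) gs)"
proof -
  have "snd (restr d (compose N F l gs)) xs = snd (compose d (restr d F) l (map (restr d) gs)) xs" for xs
  proof (cases "valid d l xs")
    case True
    then have v: "valid N l xs" using valid_mono assms(2) by blast
    have vm: "valid N (fst F) (map (\<lambda>g. snd g xs) gs)" using valid_map[OF assms(5) v] assms(6) by simp
    have M: "map (\<lambda>g. snd (restr d g) xs) gs = map (\<lambda>x. x mod d) (map (\<lambda>g. snd g xs) gs)"
      using True assms(5) by (auto simp: restr_def)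
    have V: "valid d (fst F) (map (\<lambda>x. x mod d) (map (\<lambda>g. snd g xs) gs))"
      using valid_mod(1)[OF vm assms(1,2)] .
    have "snd (compose d (restr d F) l (map (restr d) gs)) xs
        = snd (restr d F) (map (\<lambda>g. snd (restr d g) xs) gs)"
      using True by (simp add: compose_def o_def)
    also have "\<dots> = snd (restr d F) (map (\<lambda>x. x mod d) (map (\<lambda>g. snd g xs) gs))"
      by (simp only: M)
    also have "\<dots> = snd F (map (\<lambda>x. x mod d) (map (\<lambda>g. snd g xs) gs)) mod d"
      using V by (rule restr_snd)
    also have "\<dots> = snd F (map (\<lambda>g. snd g xs) gs) mod d"
      using pres_cong_mod[OF assms(4) vm assms(1,2)] .
    finally show ?thesis using True v by (simp add: compose_def restr_def)
  qed (simp add: compose_def restr_def)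
  moreover have "fst (restr d (compose N F l gs)) = fst (compose d (restr d F) l (map (restr d) gs))"
    by (simp add: compose_def restr_def)
  ultimately show ?thesis by (simp add: prod_eq_iff fun_eq_iff)
qed

lemma ops_valid: "p \<in> ops N \<Longrightarrow> valid N (fst p) xs \<Longrightarrow> snd p xs < N"
  and ops_invalid: "p \<in> ops N \<Longrightarrow> \<not> valid N (fst p) xs \<Longrightarrow> snd p xs = 0"
  and ops_arity: "p \<in> ops N \<Longrightarrow> 1 \<le> fst p"
  unfolding ops_def is_op_def by auto

lemma fst_restr: "fst (restr d p) = fst p" by (simp add: restr_def)

lemma prod_restr:
  assumes cop: "coprime m n" and m0: "0 < m" and n0: "0 < n" and p: "p \<in> Ocong m n"
  shows "prod_op m n (restr m p) (restr n p) = p"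
proof -
  have pops: "p \<in> ops (m*n)" and pm: "pres_cong (m*n) m p" and pn: "pres_cong (m*n) n p"
    using p unfolding Ocong_def by auto
  have mle: "m \<le> m*n" and nle: "n \<le> m*n" using m0 n0 by auto
  have "snd (prod_op m n (restr m p) (restr n p)) xs = snd p xs" for xs
  proof (cases "valid (m*n) (fst p) xs")
    case True
    have a: "snd (restr m p) (map (\<lambda>x. x mod m) xs) = snd p xs mod m"
      using restr_snd[OF valid_mod(1)[OF True m0 mle]] pres_cong_mod[OF pm True m0 mle] by simp
    have b: "snd (restr n p) (map (\<lambda>x. x mod n) xs) = snd p xs mod n"
      using restr_snd[OF valid_mod(1)[OF True n0 nle]] pres_cong_mod[OF pn True n0 nle] by simp
    have "snd (prod_op m n (restr m p) (restr n p)) xs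
      = (THE z. z < m*n \<and> z mod m = snd (restr m p) (map (\<lambda>x. x mod m) xs)
            \<and> z mod n = snd (restr n p) (map (\<lambda>x. x mod n) xs))"
      using True by (simp add: prod_op_def fst_restr)
    also have "\<dots> = (THE z. z < m*n \<and> z mod m = snd p xs mod m \<and> z mod n = snd p xs mod n)"
      unfolding a b ..
    also have "\<dots> = snd p xs" by (rule the_crt[OF cop ops_valid[OF pops True]]) auto
    finally show ?thesis .
  next
    case False
    then show ?thesis using ops_invalid[OF pops False] by (simp add: prod_op_def restr_def)
  qed
  moreover have "fst (prod_op m n (restr m p) (restr n p)) = fst p" by (simp add: prod_op_def restr_def)
  ultimately show ?thesis by (simp add: prod_eq_iff fun_eq_iff)
qed

lemma prod_val:
  assumes cop: "coprime m n" and m0: "0 < m" and n0: "0 < n"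
    and g: "g \<in> ops m" and h: "h \<in> ops n" and gh: "fst g = fst h"
    and v: "valid (m*n) (fst g) xs"
  shows "snd (prod_op m n g h) xs < m*n
    \<and> snd (prod_op m n g h) xs mod m = snd g (map (\<lambda>x. x mod m) xs)
    \<and> snd (prod_op m n g h) xs mod n = snd h (map (\<lambda>x. x mod n) xs)"
proof -
  have mle: "m \<le> m*n" and nle: "n \<le> m*n" using m0 n0 by auto
  have a: "snd g (map (\<lambda>x. x mod m) xs) < m" using ops_valid[OF g valid_mod(1)[OF v m0 mle]] .
  have "valid n (fst h) (map (\<lambda>x. x mod n) xs)" using valid_mod(1)[OF v n0 nle] gh by simp
  then have b: "snd h (map (\<lambda>x. x mod n) xs) < n" using ops_valid[OF h] by blast
  obtain z where z: "z < m*n" "z mod m = snd g (map (\<lambda>x. x mod m) xs) mod m"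
     "z mod n = snd h (map (\<lambda>x. x mod n) xs) mod n"
    using crt_exists[OF cop m0 n0] by blast
  have z': "z mod m = snd g (map (\<lambda>x. x mod m) xs)" "z mod n = snd h (map (\<lambda>x. x mod n) xs)"
    using z a b by auto
  have "snd (prod_op m n g h) xs = z"
    using v the_crt[OF cop z(1) z'] by (simp add: prod_op_def)
  then show ?thesis using z(1) z' by simp
qed

lemma prod_props:
  assumes cop: "coprime m n" and m0: "0 < m" and n0: "0 < n"
    and g: "g \<in> ops m" and h: "h \<in> ops n" and gh: "fst g = fst h"
  shows "prod_op m n g h \<in> Ocong m n" "restr m (prod_op m n g h) = g" "restr n (prod_op m n g h) = h"
proof -
  note pv = prod_val[OF cop m0 n0 g h gh]
  have mle: "m \<le> m*n" and nle: "n \<le> m*n" using m0 n0 by auto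
  have fp: "fst (prod_op m n g h) = fst g" by (simp add: prod_op_def)
  have "prod_op m n g h \<in> ops (m*n)"
    unfolding ops_def is_op_def using pv ops_arity[OF g] by (auto simp: prod_op_def)
  moreover have "pres_cong (m*n) m (prod_op m n g h)"
    unfolding pres_cong_def fp
  proof (intro allI impI)
    fix xs ys assume xs: "valid (m*n) (fst g) xs" and ys: "valid (m*n) (fst g) ys"
      and e: "\<forall>i<fst g. xs ! i mod m = ys ! i mod m"
    have "map (\<lambda>x. x mod m) xs = map (\<lambda>x. x mod m) ys"
      using xs ys e unfolding valid_def by (intro nth_equalityI) auto
    then show "snd (prod_op m n g h) xs mod m = snd (prod_op m n g h) ys mod m"
      using pv[OF xs] pv[OF ys] by simp
  qed
  moreover have "pres_cong (m*n) n (prod_op m n g h)"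
    unfolding pres_cong_def fp
  proof (intro allI impI)
    fix xs ys assume xs: "valid (m*n) (fst g) xs" and ys: "valid (m*n) (fst g) ys"
      and e: "\<forall>i<fst g. xs ! i mod n = ys ! i mod n"
    have "map (\<lambda>x. x mod n) xs = map (\<lambda>x. x mod n) ys"
      using xs ys e unfolding valid_def by (intro nth_equalityI) auto
    then show "snd (prod_op m n g h) xs mod n = snd (prod_op m n g h) ys mod n"
      using pv[OF xs] pv[OF ys] by simp
  qed
  ultimately show "prod_op m n g h \<in> Ocong m n" unfolding Ocong_def by blast
  have "snd (restr m (prod_op m n g h)) xs = snd g xs" for xs
  proof (cases "valid m (fst g) xs")
    case True
    have v: "valid (m*n) (fst g) xs" using valid_mono[OF True mle] .
    have "map (\<lambda>x. x mod m) xs = xs" using True unfolding valid_def by (simp add: map_idI)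
    then show ?thesis using True pv[OF v] by (simp add: restr_def fp)
  next
    case False
    then show ?thesis using ops_invalid[OF g False] by (simp add: restr_def fp)
  qed
  then show "restr m (prod_op m n g h) = g" by (simp add: prod_eq_iff fun_eq_iff restr_def prod_op_def)
  have "snd (restr n (prod_op m n g h)) xs = snd h xs" for xs
  proof (cases "valid n (fst g) xs")
    case True
    have v: "valid (m*n) (fst g) xs" using valid_mono[OF True nle] .
    have "map (\<lambda>x. x mod n) xs = xs" using True unfolding valid_def by (simp add: map_idI)
    then show ?thesis using True pv[OF v] by (simp add: restr_def fp)
  next
    case False
    then show ?thesis using ops_invalid[OF h] False gh by (simp add: restr_def fp)
  qed
  then show "restr n (prod_op m n g h) = h" using gh by (simp add: prod_eq_iff fun_eq_iff restr_def prod_op_def)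
qed

lemma arith: fixes e e' x y m N :: nat
  assumes "m dvd N" "e mod m = 1 mod m" "e' mod m = 0"
  shows "(e*x + e'*y) mod N mod m = x mod m"
proof -
  have "(e*x + e'*y) mod N mod m = (e*x + e'*y) mod m" using assms(1) by (simp add: mod_mod_cancel)
  also have "\<dots> = ((e mod m)*x + (e' mod m)*y) mod m" by (metis mod_add_cong mod_mult_left_eq)
  also have "\<dots> = x mod m" using assms(2,3) by (metis add.right_neutral mod_mult_left_eq mult_1 mult_zero_left)
  finally show ?thesis .
qed

lemma clone_compose: "clone N C \<Longrightarrow> f \<in> C \<Longrightarrow> 1 \<le> l \<Longrightarrow> length gs = fst f
   \<Longrightarrow> (\<forall>g\<in>set gs. g \<in> C \<and> fst g = l) \<Longrightarrow> compose N f l gs \<in> C"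
  and clone_proj: "clone N C \<Longrightarrow> 1 \<le> k \<Longrightarrow> i < k \<Longrightarrow> proj N k i \<in> C"
  and clone_ops: "clone N C \<Longrightarrow> C \<subseteq> ops N"
  unfolding clone_def by blast+

lemma proj_props:
  assumes "1 \<le> k" "i < k" "0 < d" "d \<le> N"
  shows "proj N k i \<in> ops N" "pres_cong N d (proj N k i)" "restr d (proj N k i) = proj d k i"
proof -
  show "proj N k i \<in> ops N" using assms unfolding ops_def is_op_def proj_def valid_def by auto
  show "pres_cong N d (proj N k i)" using assms unfolding pres_cong_def proj_def by auto
  have "(if valid d k xs then (if valid N k xs then xs ! i else 0) mod d else 0) =
        (if valid d k xs then xs ! i else 0)" for xs
    using assms valid_mono[of d k xs N] unfolding valid_def by auto
  then show "restr d (proj N k i) = proj d k i" unfolding restr_def proj_def by (simp only: snd_conv fst_conv)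
qed

lemma addop_props:
  assumes "0 < d" "d dvd N" "0 < N"
  shows "addop N \<in> ops N" "pres_cong N d (addop N)" "restr d (addop N) = addop d"
proof -
  have dN: "d \<le> N" using assms by (simp add: dvd_imp_le)
  show "addop N \<in> ops N" using assms unfolding ops_def is_op_def addop_def by auto
  show "pres_cong N d (addop N)" unfolding pres_cong_def
  proof (intro allI impI)
    fix xs ys assume xs: "valid N (fst (addop N)) xs" and ys: "valid N (fst (addop N)) ys"
      and e: "\<forall>i<fst (addop N). xs ! i mod d = ys ! i mod d"
    have "xs ! 0 mod d = ys ! 0 mod d" "xs ! 1 mod d = ys ! 1 mod d"
      using e by (simp_all add: addop_def)
    then have "(xs ! 0 + xs ! 1) mod d = (ys ! 0 + ys ! 1) mod d"
      by (rule mod_add_cong)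
    then show "snd (addop N) xs mod d = snd (addop N) ys mod d"
      using xs ys assms(2) by (simp add: addop_def mod_mod_cancel)
  qed
  have "(if valid d 2 xs then (if valid N 2 xs then (xs ! 0 + xs ! 1) mod N else 0) mod d else 0) =
        (if valid d 2 xs then (xs ! 0 + xs ! 1) mod d else 0)" for xs
    using assms valid_mono[OF _ dN, of 2 xs] by (auto simp: mod_mod_cancel)
  then show "restr d (addop N) = addop d" unfolding restr_def addop_def by (simp only: snd_conv fst_conv)
qed

definition lin :: "nat \<Rightarrow> nat \<Rightarrow> nat \<Rightarrow> operation" where
  "lin N a b = (2, \<lambda>xs. if valid N 2 xs then (a * xs ! 0 + b * xs ! 1) mod N else 0)"

lemma lin_in:
  assumes C: "clone N C" "addop N \<in> C" and N0: "0 < N"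
  shows "lin N (Suc a) (Suc b) \<in> C"
proof (induction a)
  case 0
  show ?case
  proof (induction b)
    case 0
    have "lin N (Suc 0) (Suc 0) = addop N" unfolding lin_def addop_def by (simp add: fun_eq_iff)
    then show ?case using C by simp
  next
    case (Suc b)
    have "compose N (addop N) 2 [lin N 1 (Suc b), proj N 2 1] \<in> C"
      using clone_compose[OF C(1) C(2)] Suc clone_proj[OF C(1), of 2 1]
      by (simp add: addop_def lin_def proj_def)
    moreover have "compose N (addop N) 2 [lin N 1 (Suc b), proj N 2 1] = lin N 1 (Suc (Suc b))"
      unfolding compose_def addop_def lin_def proj_def
      using N0 by (auto simp: fun_eq_iff valid_def mod_add_left_eq mod_add_right_eq algebra_simps)
    ultimately show ?case by simp
  qed
next
  case (Suc a)
  have "compose N (addop N) 2 [lin N (Suc a) (Suc b), proj N 2 0] \<in> C"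
    using clone_compose[OF C(1) C(2)] Suc clone_proj[OF C(1), of 2 0]
    by (simp add: addop_def lin_def proj_def)
  moreover have "compose N (addop N) 2 [lin N (Suc a) (Suc b), proj N 2 0] = lin N (Suc (Suc a)) (Suc b)"
    unfolding compose_def addop_def lin_def proj_def
    using N0 by (auto simp: fun_eq_iff valid_def mod_add_left_eq mod_add_right_eq algebra_simps)
  ultimately show ?case by simp
qed

lemma mix_val:
  assumes "f \<in> ops N" "g \<in> ops N" "fst g = fst f" "valid N (fst f) xs"
  shows "snd (compose N (lin N a b) (fst f) [f, g]) xs = (a * snd f xs + b * snd g xs) mod N"
proof -
  have "snd f xs < N" "snd g xs < N" using ops_valid assms by auto
  then have "valid N 2 [snd f xs, snd g xs]" unfolding valid_def by simp
  then show ?thesis using assms(4) by (simp add: compose_def lin_def)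
qed

lemma mix:
  assumes cop: "coprime m n" and m0: "0 < m" and n0: "0 < n" and C: "C \<in> JJ m n"
    and f: "f \<in> C" and g: "g \<in> C" and fg: "fst f = fst g"
  shows "prod_op m n (restr m f) (restr n g) \<in> C"
proof -
  define N where "N = m*n"
  have N0: "0 < N" using m0 n0 by (simp add: N_def)
  have cl: "clone N C" and CO: "C \<subseteq> Ocong m n" and ad: "addop N \<in> C"
    using C unfolding JJ_def N_def by auto
  have COps: "C \<subseteq> ops N" using CO unfolding Ocong_def N_def by auto
  have fo: "f \<in> ops N" and go: "g \<in> ops N" using f g COps by auto
  obtain z where z: "z < N" "z mod m = 1 mod m" "z mod n = 0 mod n"
    using crt_exists[OF cop m0 n0, of 1 0] unfolding N_def by blast
  obtain z' where z': "z' < N" "z' mod m = 0 mod m" "z' mod n = 1 mod n"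
    using crt_exists[OF cop m0 n0, of 0 1] unfolding N_def by blast
  define e where "e = z + N"
  define e' where "e' = z' + N"
  have mN: "m dvd N" and nN: "n dvd N" by (simp_all add: N_def)
  have em: "e mod m = 1 mod m" "e' mod m = 0" using z z' mN unfolding e_def e'_def
    by (simp_all add: mod_add_right_eq[symmetric] dvd_imp_mod_0)
  have en: "e mod n = 0" "e' mod n = 1 mod n" using z z' nN unfolding e_def e'_def
    by (simp_all add: mod_add_right_eq[symmetric] dvd_imp_mod_0)
  have "e = Suc (z + N - 1)" "e' = Suc (z' + N - 1)" using N0 unfolding e_def e'_def by auto
  then have L: "lin N e e' \<in> C" using lin_in[OF cl ad N0] by simp
  define R where "R = compose N (lin N e e') (fst f) [f, g]"
  have "R \<in> C" unfolding R_def
    using clone_compose[OF cl L ops_arity[OF fo]] f g fg by (simp add: lin_def)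
  then have RO: "R \<in> Ocong m n" using CO by auto
  have fR: "fst R = fst f" by (simp add: R_def compose_def)
  have Rv: "snd R xs = (e * snd f xs + e' * snd g xs) mod N" if "valid N (fst f) xs" for xs
    unfolding R_def using mix_val[OF fo go fg[symmetric] that] .
  have "snd (restr m R) xs = snd (restr m f) xs" for xs
  proof (cases "valid m (fst f) xs")
    case True
    then have v: "valid N (fst f) xs" using valid_mono mN N0 by (metis dvd_imp_le)
    show ?thesis using True fR Rv[OF v] arith[OF mN em] by (simp add: restr_def)
  qed (simp add: restr_def fR)
  then have Rm: "restr m R = restr m f" using fR by (simp add: prod_eq_iff fun_eq_iff restr_def)
  have "snd (restr n R) xs = snd (restr n g) xs" for xs
  proof (cases "valid n (fst f) xs")
    case True
    then have v: "valid N (fst f) xs" using valid_mono nN N0 by (metis dvd_imp_le)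
    have "(e * snd f xs + e' * snd g xs) mod N mod n = snd g xs mod n"
      using arith[OF nN en(2) en(1), of "snd g xs" "snd f xs"] by (simp add: add.commute)
    then show ?thesis using True fR fg Rv[OF v] by (simp add: restr_def)
  qed (simp add: restr_def fR fg)
  then have Rn: "restr n R = restr n g" using fR fg by (simp add: prod_eq_iff fun_eq_iff restr_def)
  have "R = prod_op m n (restr m R) (restr n R)" using prod_restr[OF cop m0 n0 RO] by simp
  then show ?thesis using \<open>R \<in> C\<close> Rm Rn by simp
qed

lemma list_lift: "\<forall>x\<in>set ys. x \<in> r ` A \<Longrightarrow> \<exists>xs. set xs \<subseteq> A \<and> ys = map r xs"
proof (induction ys)
  case Nil then show ?case by simp
next
  case (Cons y ys)
  then obtain xs where "set xs \<subseteq> A" "ys = map r xs" by auto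
  moreover obtain x where "x \<in> A" "y = r x" using Cons.prems by auto
  ultimately show ?case by (intro exI[of _ "x # xs"]) auto
qed

lemma part1:
  assumes d0: "0 < d" and dN: "d dvd N" and N0: "0 < N" and cl: "clone N C"
    and pc: "\<forall>p\<in>C. pres_cong N d p" and ad: "addop N \<in> C"
  shows "restr d ` C \<in> Jk d"
proof -
  have dle: "d \<le> N" using dN N0 by (simp add: dvd_imp_le)
  have CO: "C \<subseteq> ops N" using clone_ops[OF cl] .
  have "restr d ` C \<subseteq> ops d" using restr_ops[OF _ d0] CO by auto
  moreover have "\<forall>k i. 1 \<le> k \<longrightarrow> i < k \<longrightarrow> proj d k i \<in> restr d ` C"
  proof (intro allI impI)
    fix k i :: nat assume "1 \<le> k" "i < k"
    then have "proj d k i = restr d (proj N k i)" "proj N k i \<in> C"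
      using proj_props(3)[OF _ _ d0 dle] clone_proj[OF cl] by auto
    then show "proj d k i \<in> restr d ` C" by blast
  qed
  moreover have "\<forall>f\<in>restr d ` C. \<forall>l\<ge>1. \<forall>gs. length gs = fst f \<and> (\<forall>g\<in>set gs. g \<in> restr d ` C \<and> fst g = l)
            \<longrightarrow> compose d f l gs \<in> restr d ` C"
  proof (intro ballI allI impI)
    fix f' l gs' assume f': "f' \<in> restr d ` C" and l: "1 \<le> l"
      and gs': "length gs' = fst f' \<and> (\<forall>g\<in>set gs'. g \<in> restr d ` C \<and> fst g = l)"
    obtain f where f: "f \<in> C" "f' = restr d f" using f' by blast
    obtain gs where gs: "set gs \<subseteq> C" "gs' = map (restr d) gs" using list_lift[of gs' "restr d" C] gs' by auto
    have ar: "\<forall>g\<in>set gs. g \<in> C \<and> fst g = l" using gs gs' by (auto simp: fst_restr)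
    have len: "length gs = fst f" using gs gs' f by (simp add: fst_restr)
    have "compose N f l gs \<in> C" using clone_compose[OF cl f(1) l len ar] .
    moreover have "restr d (compose N f l gs) = compose d (restr d f) l (map (restr d) gs)"
      by (rule restr_compose[OF d0 dle]) (use f CO pc ar len in auto)
    ultimately show "compose d f' l gs' \<in> restr d ` C" using f gs by (metis image_eqI)
  qed
  ultimately have "clone d (restr d ` C)" unfolding clone_def by blast
  moreover have "addop d \<in> restr d ` C" using addop_props(3)[OF d0 dN N0] ad by (metis image_eqI)
  ultimately show ?thesis unfolding Jk_def by blast
qed

lemma in_clone_prod: "g \<in> D \<Longrightarrow> h \<in> E \<Longrightarrow> fst g = fst h \<Longrightarrow> prod_op m n g h \<in> clone_prod m n D E"
  unfolding clone_prod_def by blast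

lemma part2:
  assumes cop: "coprime m n" and m0: "0 < m" and n0: "0 < n" and D: "D \<in> Jk m" and E: "E \<in> Jk n"
  shows "clone_prod m n D E \<in> JJ m n"
proof -
  define N where "N = m*n"
  have N0: "0 < N" using m0 n0 by (simp add: N_def)
  have mN: "m dvd N" and nN: "n dvd N" by (simp_all add: N_def)
  have mle: "m \<le> N" and nle: "n \<le> N" using mN nN N0 by (simp_all add: dvd_imp_le)
  have clD: "clone m D" and adD: "addop m \<in> D" and clE: "clone n E" and adE: "addop n \<in> E"
    using D E unfolding Jk_def by auto
  have DO: "D \<subseteq> ops m" and EO: "E \<subseteq> ops n" using clone_ops clD clE by auto
  let ?P = "clone_prod m n D E"
  have PO: "?P \<subseteq> Ocong m n" unfolding clone_prod_def using prod_props(1)[OF cop m0 n0] DO EO by blast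
  have Pfacts: "restr m p \<in> D \<and> restr n p \<in> E \<and> p \<in> Ocong m n" if pP: "p \<in> ?P" for p
  proof -
    obtain g h where gh: "p = prod_op m n g h" "g \<in> D" "h \<in> E" "fst g = fst h"
      using pP unfolding clone_prod_def by blast
    have "g \<in> ops m" "h \<in> ops n" using gh DO EO by auto
    then show ?thesis using prod_props[OF cop m0 n0 _ _ gh(4)] gh by simp
  qed
  have POps: "?P \<subseteq> ops N" using PO unfolding Ocong_def N_def by auto
  have "\<forall>k i. 1 \<le> k \<longrightarrow> i < k \<longrightarrow> proj N k i \<in> ?P"
  proof (intro allI impI)
    fix k i :: nat assume ki: "1 \<le> k" "i < k"
    have "proj N k i \<in> Ocong m n" using proj_props[OF ki m0 mle] proj_props[OF ki n0 nle]
      unfolding Ocong_def N_def by auto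
    then have "proj N k i = prod_op m n (proj m k i) (proj n k i)"
      using prod_restr[OF cop m0 n0] proj_props(3)[OF ki m0 mle] proj_props(3)[OF ki n0 nle]
      unfolding N_def by metis
    moreover have "proj m k i \<in> D" "proj n k i \<in> E" using clone_proj clD clE ki by auto
    ultimately show "proj N k i \<in> ?P" using in_clone_prod by (metis fst_conv proj_def)
  qed
  moreover have "\<forall>f\<in>?P. \<forall>l\<ge>1. \<forall>gs. length gs = fst f \<and> (\<forall>g\<in>set gs. g \<in> ?P \<and> fst g = l)
            \<longrightarrow> compose N f l gs \<in> ?P"
  proof (intro ballI allI impI)
    fix F l gs assume F: "F \<in> ?P" and l: "1 \<le> l"
      and gs: "length gs = fst F \<and> (\<forall>g\<in>set gs. g \<in> ?P \<and> fst g = l)"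
    have FO: "F \<in> Ocong m n" and Fm: "restr m F \<in> D" and Fn: "restr n F \<in> E" using Pfacts[OF F] by auto
    have Fo: "F \<in> ops N" and Fpm: "pres_cong N m F" and Fpn: "pres_cong N n F"
      using FO unfolding Ocong_def N_def by auto
    have gso: "\<forall>g\<in>set gs. g \<in> ops N \<and> fst g = l \<and> pres_cong N m g \<and> pres_cong N n g"
      using gs Pfacts unfolding Ocong_def N_def by blast
    have len: "length gs = fst F" using gs by simp
    have CO: "compose N F l gs \<in> Ocong m n"
      using compose_ops[OF Fo _ len l] compose_pres[OF Fo Fpm _ len] compose_pres[OF Fo Fpn _ len] gso
      unfolding Ocong_def N_def by auto
    have rm: "restr m (compose N F l gs) = compose m (restr m F) l (map (restr m) gs)"
      by (rule restr_compose[OF m0 mle Fo Fpm]) (use gso len in auto)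
    have rn: "restr n (compose N F l gs) = compose n (restr n F) l (map (restr n) gs)"
      by (rule restr_compose[OF n0 nle Fo Fpn]) (use gso len in auto)
    have c1: "compose m (restr m F) l (map (restr m) gs) \<in> D"
      by (rule clone_compose[OF clD Fm l]) (use gs Pfacts in \<open>auto simp: fst_restr\<close>)
    have c2: "compose n (restr n F) l (map (restr n) gs) \<in> E"
      by (rule clone_compose[OF clE Fn l]) (use gs Pfacts in \<open>auto simp: fst_restr\<close>)
    have "compose N F l gs = prod_op m n (restr m (compose N F l gs)) (restr n (compose N F l gs))"
      using prod_restr[OF cop m0 n0 CO] by simp
    then show "compose N F l gs \<in> ?P" using in_clone_prod[OF c1 c2] rm rn by (simp add: compose_def)
  qed
  ultimately have "clone N ?P" using POps unfolding clone_def by blast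
  moreover have "addop N \<in> ?P"
  proof -
    have "addop N \<in> Ocong m n" using addop_props[OF m0 mN N0] addop_props[OF n0 nN N0]
      unfolding Ocong_def N_def by auto
    then have "addop N = prod_op m n (addop m) (addop n)"
      using prod_restr[OF cop m0 n0] addop_props(3)[OF m0 mN N0] addop_props(3)[OF n0 nN N0]
      unfolding N_def by metis
    then show ?thesis using in_clone_prod[OF adD adE] by (simp add: addop_def)
  qed
  ultimately show ?thesis using PO unfolding JJ_def N_def by blast
qed

lemma part3:
  assumes cop: "coprime m n" and m0: "0 < m" and n0: "0 < n" and C: "C \<in> JJ m n"
  shows "clone_prod m n (restr m ` C) (restr n ` C) = C"
proof
  show "clone_prod m n (restr m ` C) (restr n ` C) \<subseteq> C"
  proof
    fix p assume "p \<in> clone_prod m n (restr m ` C) (restr n ` C)"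
    then obtain f g where "p = prod_op m n (restr m f) (restr n g)" "f \<in> C" "g \<in> C"
      "fst (restr m f) = fst (restr n g)"
      unfolding clone_prod_def by blast
    then show "p \<in> C" using mix[OF cop m0 n0 C] by (simp add: fst_restr)
  qed
  show "C \<subseteq> clone_prod m n (restr m ` C) (restr n ` C)"
  proof
    fix f assume f: "f \<in> C"
    then have "f \<in> Ocong m n" using C unfolding JJ_def by auto
    then have "f = prod_op m n (restr m f) (restr n f)" using prod_restr[OF cop m0 n0] by simp
    then show "f \<in> clone_prod m n (restr m ` C) (restr n ` C)"
      using in_clone_prod[of "restr m f" "restr m ` C" "restr n f" "restr n ` C" m n] f
      by (simp add: fst_restr)
  qed
qed

theorem theorem2p2:
  fixes m n :: nat
  assumes "coprime m n" and "0 < m" and "0 < n"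
  shows "(\<forall>C\<in>JJ m n. restr m ` C \<in> Jk m \<and> restr n ` C \<in> Jk n)
    \<and> (\<forall>D\<in>Jk m. \<forall>E\<in>Jk n. clone_prod m n D E \<in> JJ m n)
    \<and> (\<forall>C\<in>JJ m n. clone_prod m n (restr m ` C) (restr n ` C) = C)
    \<and> (\<forall>D\<in>Jk m. \<forall>E\<in>Jk n. restr m ` clone_prod m n D E = D \<and> restr n ` clone_prod m n D E = E)
    \<and> (\<forall>C\<in>JJ m n. \<forall>C'\<in>JJ m n. C \<subseteq> C' \<longleftrightarrow> (restr m ` C \<subseteq> restr m ` C' \<and> restr n ` C \<subseteq> restr n ` C'))"
proof (intro conjI ballI)
  note cop = assms(1) and m0 = assms(2) and n0 = assms(3)
  have N0: "0 < m*n" using m0 n0 by simp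
  fix C assume C: "C \<in> JJ m n"
  have cl: "clone (m*n) C" and ad: "addop (m*n) \<in> C" and CO: "C \<subseteq> Ocong m n" using C unfolding JJ_def by auto
  show "restr m ` C \<in> Jk m"
    by (rule part1[OF m0 _ N0 cl _ ad]) (use CO in \<open>auto simp: Ocong_def\<close>)
  show "restr n ` C \<in> Jk n"
    by (rule part1[OF n0 _ N0 cl _ ad]) (use CO in \<open>auto simp: Ocong_def\<close>)
next
  fix D E assume "D \<in> Jk m" "E \<in> Jk n"
  then show "clone_prod m n D E \<in> JJ m n" using part2 assms by blast
next
  fix C assume "C \<in> JJ m n"
  then show "clone_prod m n (restr m ` C) (restr n ` C) = C" using part3 assms by blast
next
  fix D E assume D: "D \<in> Jk m" and E: "E \<in> Jk n"
  have clD: "clone m D" and clE: "clone n E" using D E unfolding Jk_def by auto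
  have DO: "D \<subseteq> ops m" and EO: "E \<subseteq> ops n" using clone_ops clD clE by auto
  show "restr m ` clone_prod m n D E = D"
  proof
    show "restr m ` clone_prod m n D E \<subseteq> D"
    proof
      fix q assume "q \<in> restr m ` clone_prod m n D E"
      then obtain g h where gh: "q = restr m (prod_op m n g h)" "g \<in> D" "h \<in> E" "fst g = fst h"
        unfolding clone_prod_def by blast
      have "g \<in> ops m" "h \<in> ops n" using gh DO EO by auto
      then show "q \<in> D" using prod_props(2)[OF assms _ _ gh(4)] gh by simp
    qed
    show "D \<subseteq> restr m ` clone_prod m n D E"
    proof
      fix g assume g: "g \<in> D"
      have k: "1 \<le> fst g" using ops_arity[of g m] g DO by blast
      have h: "proj n (fst g) 0 \<in> E" using clone_proj[OF clE k] k by simp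
      have fh: "fst g = fst (proj n (fst g) 0)" by (simp add: proj_def)
      have "restr m (prod_op m n g (proj n (fst g) 0)) = g"
        using prod_props(2)[OF assms _ _ fh] g h DO EO by auto
      then show "g \<in> restr m ` clone_prod m n D E" using in_clone_prod[OF g h fh] by (metis image_eqI)
    qed
  qed
  show "restr n ` clone_prod m n D E = E"
  proof
    show "restr n ` clone_prod m n D E \<subseteq> E"
    proof
      fix q assume "q \<in> restr n ` clone_prod m n D E"
      then obtain g h where gh: "q = restr n (prod_op m n g h)" "g \<in> D" "h \<in> E" "fst g = fst h"
        unfolding clone_prod_def by blast
      have "g \<in> ops m" "h \<in> ops n" using gh DO EO by auto
      then show "q \<in> E" using prod_props(3)[OF assms _ _ gh(4)] gh by simp
    qed
    show "E \<subseteq> restr n ` clone_prod m n D E"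
    proof
      fix h assume h: "h \<in> E"
      have k: "1 \<le> fst h" using ops_arity[of h n] h EO by blast
      have g: "proj m (fst h) 0 \<in> D" using clone_proj[OF clD k] k by simp
      have fg: "fst (proj m (fst h) 0) = fst h" by (simp add: proj_def)
      have "restr n (prod_op m n (proj m (fst h) 0) h) = h"
        using prod_props(3)[OF assms _ _ fg] g h DO EO by auto
      then show "h \<in> restr n ` clone_prod m n D E" using in_clone_prod[OF g h fg] by (metis image_eqI)
    qed
  qed
next
  fix C C' assume C: "C \<in> JJ m n" and C': "C' \<in> JJ m n"
  show "C \<subseteq> C' \<longleftrightarrow> (restr m ` C \<subseteq> restr m ` C' \<and> restr n ` C \<subseteq> restr n ` C')"
  proof
    assume "C \<subseteq> C'" then show "restr m ` C \<subseteq> restr m ` C' \<and> restr n ` C \<subseteq> restr n ` C'" by auto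
  next
    assume "restr m ` C \<subseteq> restr m ` C' \<and> restr n ` C \<subseteq> restr n ` C'"
    then have "clone_prod m n (restr m ` C) (restr n ` C) \<subseteq> clone_prod m n (restr m ` C') (restr n ` C')"
      unfolding clone_prod_def by blast
    then show "C \<subseteq> C'" using part3[OF assms C] part3[OF assms C'] by simp
  qed
qed

end
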